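(* Let $C\subset\mathbb{R}^n$ be a pointed, $n$-dimensional closed convex cone and $\Omega=S^{n-1}\cap\operatorname{int}C^{\circ}$. Let $\mu$ be a nonzero, finite Borel measure on $\Omega$, and let $(\omega_i)_{i\in\mathbb{N}}$ be compact subsets of $\Omega$ with $\omega_i\subset\operatorname{int}\omega_{i+1}$ and $\bigcup_i\omega_i=\Omega$. Let $\mu_i(\sigma)=\mu(\sigma\cap\omega_i)$, let $i_0$ be such that $\mu_{i_0}\neq0$, and for $f\in C^+(\omega_i)$ let $I_{\mu_i}(f)=\gamma^n([f])\int_{\omega_i}f\,d\mu_i$, where $[f]$ is the Wulff shape associated with $(C,\omega_i,f)$. Suppose that for each $i\ge i_0$ there is a $C$-pseudo-cone $K_i\in\mathcal{K}(C,\omega_i)$ with $I_{\mu_i}(\bar h_{K_i})=\sup\{I_{\mu_i}(f):f\in C^+(\omega_i)\}$. Then there exists a constant $a>0$ such that $I_{\mu_i}(\bar h_{K_i})>a$ for all $i\ge i_0$.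
   Context: $C^{\circ}=\{x:\langle x,y\rangle\le 0\ \forall y\in C\}$. A pseudo-cone is a nonempty closed convex set $K$ with $o\notin K$ and $\lambda K\subseteq K$ for $\lambda\ge1$; it is a $C$-pseudo-cone if its recession cone $\{z:K+z\subseteq K\}$ equals $C$. Support function $h_K(x)=\sup_{y\in K}\langle x,y\rangle$ on $C^{\circ}$, $\bar h_K=-h_K$; $H_K^-(u)=\{x:\langle x,u\rangle\le h_K(u)\}$. $\mathcal{K}(C,\omega)$ is the set of $C$-pseudo-cones $K$ with $K=C\cap\bigcap_{u\in\omega}H^-_K(u)$. $C^+(\omega)$ denotes the set of continuous functions $\omega\to(0,\infty)$. The Wulff shape of a positive continuous $h$ on compact $\omega\subset\Omega$ is $[h]=C\cap\bigcap_{u\in\omega}\{y:\langle y,u\rangle\le -h(u)\}$. $\gamma^n$ is the standard Gaussian probability measure on $\mathbb{R}^n$. *)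

theory Defs
  imports "HOL-Analysis.Analysis" "HOL-Probability.Probability"
begin

definition polar_cone :: "'a::euclidean_space set \<Rightarrow> 'a set" where
  "polar_cone C = {x. \<forall>y\<in>C. x \<bullet> y \<le> 0}"

definition pointed_ndim_closed_convex_cone :: "'a::euclidean_space set \<Rightarrow> bool" where
  "pointed_ndim_closed_convex_cone C \<longleftrightarrow>
     cone C \<and> convex C \<and> closed C \<and> C \<inter> uminus ` C = {0} \<and> interior C \<noteq> {}"

definition Omega :: "'a::euclidean_space set \<Rightarrow> 'a set" where
  "Omega C = sphere 0 1 \<inter> interior (polar_cone C)"

definition recession_cone :: "'a::euclidean_space set \<Rightarrow> 'a set" where
  "recession_cone K = {z. \<forall>y\<in>K. y + z \<in> K}"

definition pseudo_cone :: "'a::euclidean_space set \<Rightarrow> bool" where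
  "pseudo_cone K \<longleftrightarrow> K \<noteq> {} \<and> closed K \<and> convex K \<and> 0 \<notin> K \<and>
     (\<forall>t::real. t \<ge> 1 \<longrightarrow> (\<lambda>y. t *\<^sub>R y) ` K \<subseteq> K)"

definition C_pseudo_cone :: "'a::euclidean_space set \<Rightarrow> 'a set \<Rightarrow> bool" where
  "C_pseudo_cone C K \<longleftrightarrow> pseudo_cone K \<and> recession_cone K = C"

text \<open>Support function, meant to be evaluated on the polar cone.\<close>
definition supp_fun :: "'a::euclidean_space set \<Rightarrow> 'a \<Rightarrow> real" where
  "supp_fun K x = Sup ((\<lambda>y. x \<bullet> y) ` K)"

definition bar_supp :: "'a::euclidean_space set \<Rightarrow> 'a \<Rightarrow> real" where
  "bar_supp K x = - supp_fun K x"

definition H_minus :: "'a::euclidean_space set \<Rightarrow> 'a \<Rightarrow> 'a set" where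
  "H_minus K u = {x. x \<bullet> u \<le> supp_fun K u}"

definition Kclass :: "'a::euclidean_space set \<Rightarrow> 'a set \<Rightarrow> 'a set set" where
  "Kclass C \<omega> = {K. C_pseudo_cone C K \<and> K = C \<inter> (\<Inter>u\<in>\<omega>. H_minus K u)}"

definition Cplus :: "'a::topological_space set \<Rightarrow> ('a \<Rightarrow> real) set" where
  "Cplus \<omega> = {f. continuous_on \<omega> f \<and> (\<forall>u\<in>\<omega>. f u > 0)}"

definition wulff :: "'a::euclidean_space set \<Rightarrow> 'a set \<Rightarrow> ('a \<Rightarrow> real) \<Rightarrow> 'a set" where
  "wulff C \<omega> h = C \<inter> (\<Inter>u\<in>\<omega>. {y. y \<bullet> u \<le> - h u})"

definition gaussian :: "'a::euclidean_space measure" where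
  "gaussian = density lborel
     (\<lambda>x. ennreal ((2 * pi) powr (- real DIM('a) / 2) * exp (- (norm x)\<^sup>2 / 2)))"

definition restr_meas :: "'a measure \<Rightarrow> 'a set \<Rightarrow> 'a measure" where
  "restr_meas \<mu> \<omega> = density \<mu> (indicator \<omega>)"

definition I_fun :: "'a::euclidean_space set \<Rightarrow> 'a measure \<Rightarrow> 'a set \<Rightarrow> ('a \<Rightarrow> real) \<Rightarrow> real" where
  "I_fun C \<mu> \<omega> f = measure gaussian (wulff C \<omega> f) * (LINT u:\<omega>|restr_meas \<mu> \<omega>. f u)"

end

theory Submission
  imports Defs
begin

lemma c_pow: "(2 * pi) powr (- real n / 2) = (1 / sqrt (2 * pi)) ^ n"
proof -
  have a: "(2 * pi) powr (- (1/2)) = 1 / sqrt (2 * pi)"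
    by (subst powr_minus, subst powr_half_sqrt) (auto simp: divide_inverse)
  have "(1 / sqrt (2 * pi)) ^ n = ((2 * pi) powr (- (1/2))) ^ n" by (simp only: a)
  also have "\<dots> = (2 * pi) powr (real n * (- (1/2)))" by (rule powr_power) simp
  also have "real n * (- (1/2)) = - real n / 2" by simp
  finally show ?thesis by simp
qed

lemma gauss_dens_eq:
  fixes x :: "'a::euclidean_space"
  shows "(2 * pi) powr (- real DIM('a) / 2) * exp (- (norm x)\<^sup>2 / 2) =
    (\<Prod>b\<in>(Basis::'a set). std_normal_density (x \<bullet> b))"
proof -
  have xx: "x \<bullet> x = (\<Sum>b\<in>(Basis::'a set). (x \<bullet> b) * (x \<bullet> b))" by (rule euclidean_inner)
  have n: "(norm x)\<^sup>2 = (\<Sum>b\<in>(Basis::'a set). (x \<bullet> b)\<^sup>2)"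
    unfolding power2_norm_eq_inner xx by (simp add: power2_eq_square)
  have e: "exp (- (norm x)\<^sup>2 / 2) = (\<Prod>b\<in>(Basis::'a set). exp (- (x \<bullet> b)\<^sup>2 / 2))"
  proof -
    have "- (norm x)\<^sup>2 / 2 = (\<Sum>b\<in>(Basis::'a set). - (x \<bullet> b)\<^sup>2 / 2)"
      unfolding n sum_divide_distrib[symmetric] sum_negf by simp
    then show ?thesis by (simp only:) (rule exp_sum, simp)
  qed
  have c: "(2 * pi) powr (- real DIM('a) / 2) = (1 / sqrt (2 * pi)) ^ DIM('a)"
    by (rule c_pow)
  show ?thesis unfolding std_normal_density_def e c prod.distrib prod_constant ..
qed

lemma gaussian_prob: "prob_space (gaussian :: 'a::euclidean_space measure)"
proof
  have "emeasure (gaussian :: 'a measure) UNIV = (\<integral>\<^sup>+x. ennreal (\<Prod>b\<in>(Basis::'a set). std_normal_density (x \<bullet> b)) \<partial>lborel)"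
    unfolding gaussian_def gauss_dens_eq by (simp add: emeasure_density)
  also have "\<dots> = (\<integral>\<^sup>+x. (\<Prod>b\<in>(Basis::'a set). ennreal (std_normal_density (x \<bullet> b))) \<partial>lborel)"
    by (simp add: prod_ennreal)
  also have "\<dots> = (\<Prod>b\<in>(Basis::'a set). (\<integral>\<^sup>+x. ennreal (std_normal_density x) \<partial>lborel))"
    by (rule nn_integral_lborel_prod) auto
  also have "(\<integral>\<^sup>+x. ennreal (std_normal_density x) \<partial>lborel) = 1"
    by (subst nn_integral_eq_integral) auto
  finally show "emeasure (gaussian :: 'a measure) (space gaussian) = 1" 
    by (simp add: gaussian_def)
qed
lemma gaussian_sets[simp]: "sets (gaussian :: 'a::euclidean_space measure) = sets borel"
  by (simp add: gaussian_def)

lemma gaussian_ball_pos: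
  fixes z :: "'a::euclidean_space"
  shows "0 < measure gaussian (ball z 1)"
proof -
  interpret G: prob_space "gaussian :: 'a measure" by (rule gaussian_prob)
  define c where "c = (2 * pi) powr (- real DIM('a) / 2) * exp (- (norm z + 1)\<^sup>2 / 2)"
  have cpos: "c > 0" unfolding c_def by simp
  have le: "ennreal c * indicator (ball z 1) x \<le>
      ennreal ((2 * pi) powr (- real DIM('a) / 2) * exp (- (norm x)\<^sup>2 / 2)) * indicator (ball z 1) x" for x
  proof (cases "x \<in> ball z 1")
    case True
    then have "norm x \<le> norm z + 1"
      by (metis dist_norm mem_ball norm_minus_commute norm_triangle_sub add_le_cancel_left less_imp_le order_trans add.commute)
    then have "(norm x)\<^sup>2 \<le> (norm z + 1)\<^sup>2" by (intro power_mono) auto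
    then have "c \<le> (2 * pi) powr (- real DIM('a) / 2) * exp (- (norm x)\<^sup>2 / 2)"
      unfolding c_def by (intro mult_left_mono) auto
    then show ?thesis using True by (simp add: ennreal_leI)
  qed simp
  have m: "emeasure lborel (ball z 1) = ennreal (measure lborel (ball z 1))"
    using emeasure_lborel_ball_finite[of z 1] by (intro emeasure_eq_ennreal_measure) simp
  have "0 < ennreal (c * measure lborel (ball z 1))"
    using cpos content_ball_pos[of 1 z, unfolded measure_def] by simp
  also have "ennreal (c * measure lborel (ball z 1)) = ennreal c * emeasure lborel (ball z 1)"
    unfolding m using cpos by (intro ennreal_mult) auto
  also have "\<dots> = (\<integral>\<^sup>+x. ennreal c * indicator (ball z 1) x \<partial>lborel)"
    by (simp add: nn_integral_cmult_indicator)
  also have "\<dots> \<le> (\<integral>\<^sup>+x. ennreal ((2 * pi) powr (- real DIM('a) / 2) * exp (- (norm x)\<^sup>2 / 2)) * indicator (ball z 1) x \<partial>lborel)"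
    by (intro nn_integral_mono le)
  also have "\<dots> = emeasure gaussian (ball z 1)"
    unfolding gaussian_def by (subst emeasure_density) auto
  finally show ?thesis by (simp add: G.emeasure_eq_measure)
qed

lemma wulff_ball:
  fixes C :: "'a::euclidean_space set"
  assumes cone: "pointed_ndim_closed_convex_cone C"
  obtains z :: 'a where "\<And>w. w \<subseteq> Omega C \<Longrightarrow> ball z 1 \<subseteq> wulff C w (\<lambda>_. 1)"
proof -
  from cone have cC: "cone C" and intC: "interior C \<noteq> {}"
    unfolding pointed_ndim_closed_convex_cone_def by auto
  then obtain y0 where "y0 \<in> interior C" by auto
  then obtain r where r: "r > 0" "ball y0 r \<subseteq> C" by (auto simp: mem_interior)
  define z :: 'a where "z = (4 / r) *\<^sub>R y0"
  have "ball z 1 \<subseteq> wulff C w (\<lambda>_. 1)" if w: "w \<subseteq> Omega C" for w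
  proof
    fix y assume y: "y \<in> ball z 1"
    have "(r/4) *\<^sub>R y \<in> ball y0 r"
    proof -
      have "dist y0 ((r/4) *\<^sub>R y) = dist ((r/4) *\<^sub>R z) ((r/4) *\<^sub>R y)"
        using r by (simp add: z_def)
      also have "\<dots> = (r/4) * dist z y" using r by (simp add: dist_norm scaleR_diff_right[symmetric])
      also have "\<dots> < r/4 * 1" using y r by (intro mult_strict_left_mono) auto
      finally show ?thesis using r by simp
    qed
    then have "(r/4) *\<^sub>R y \<in> C" using r by auto
    then have "(4/r) *\<^sub>R ((r/4) *\<^sub>R y) \<in> C"
      using cC \<open>(r/4) *\<^sub>R y \<in> C\<close> \<open>r > 0\<close> unfolding cone_def
      by (metis divide_nonneg_pos less_imp_le zero_le_numeral)
    then have yC: "y \<in> C" using r by simp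
    have "y \<bullet> u \<le> - 1" if u: "u \<in> w" for u
    proof -
      have uO: "u \<in> Omega C" using u w by auto
      then have nu: "norm u = 1" and up: "u \<in> polar_cone C"
        unfolding Omega_def using interior_subset by auto
      have "y0 + (r/2) *\<^sub>R u \<in> ball y0 r" using r nu by (simp add: dist_norm)
      then have "y0 + (r/2) *\<^sub>R u \<in> C" using r by auto
      then have "u \<bullet> (y0 + (r/2) *\<^sub>R u) \<le> 0" using up unfolding polar_cone_def by auto
      then have "u \<bullet> y0 + r/2 \<le> 0" using nu by (simp add: inner_add_right power2_norm_eq_inner[symmetric])
      then have zu: "z \<bullet> u \<le> -2" using r
        by (simp add: z_def inner_commute) (simp add: field_simps)
      have "(y - z) \<bullet> u \<le> norm (y - z) * norm u" by (rule norm_cauchy_schwarz)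
      also have "\<dots> \<le> 1" using y nu by (simp add: dist_norm norm_minus_commute less_imp_le)
      finally have "(y - z) \<bullet> u \<le> 1" .
      then show ?thesis using zu by (simp add: inner_diff_left)
    qed
    then show "y \<in> wulff C w (\<lambda>_. 1)" using yC unfolding wulff_def by auto
  qed
  then show ?thesis using that by blast
qed

theorem lemma4p3:
  fixes C :: "'a::euclidean_space set"
    and \<mu> :: "'a measure"
    and \<omega> :: "nat \<Rightarrow> 'a set"
    and K :: "nat \<Rightarrow> 'a set"
    and i0 :: nat
  assumes cone: "pointed_ndim_closed_convex_cone C"
    and mu_sets: "sets \<mu> = sets (restrict_space borel (Omega C))"
    and mu_finite: "finite_measure \<mu>"
    and mu_nonzero: "emeasure \<mu> (Omega C) \<noteq> 0"
    and om_compact: "\<And>i. compact (\<omega> i)"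
    and om_sub: "\<And>i. \<omega> i \<subseteq> Omega C"
    and om_int: "\<And>i. \<omega> i \<subseteq> (top_of_set (Omega C)) interior_of (\<omega> (Suc i))"
    and om_union: "(\<Union>i. \<omega> i) = Omega C"
    and i0: "emeasure (restr_meas \<mu> (\<omega> i0)) (Omega C) \<noteq> 0"
    and K_class: "\<And>i. i \<ge> i0 \<Longrightarrow> K i \<in> Kclass C (\<omega> i)"
    and K_max: "\<And>i. i \<ge> i0 \<Longrightarrow>
       ereal (I_fun C \<mu> (\<omega> i) (bar_supp (K i))) =
       (SUP f \<in> Cplus (\<omega> i). ereal (I_fun C \<mu> (\<omega> i) f))"
  shows "\<exists>a>0. \<forall>i\<ge>i0. I_fun C \<mu> (\<omega> i) (bar_supp (K i)) > a"
proof -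
  interpret G: prob_space "gaussian :: 'a measure" by (rule gaussian_prob)
  interpret M: finite_measure \<mu> by (rule mu_finite)
  have space_mu: "space \<mu> = Omega C"
    using sets_eq_imp_space_eq[OF mu_sets] by (simp add: space_restrict_space)
  have om_sets: "\<omega> i \<in> sets \<mu>" for i
  proof -
    have "\<omega> i \<in> sets borel" using om_compact[of i] by (simp add: compact_imp_closed borel_closed)
    moreover have "\<omega> i = Omega C \<inter> \<omega> i" using om_sub[of i] by auto
    ultimately show ?thesis unfolding mu_sets sets_restrict_space by blast
  qed
  have om_mono: "\<omega> i \<subseteq> \<omega> j" if "i \<le> j" for i j
  proof -
    have "\<omega> n \<subseteq> \<omega> (Suc n)" for n
      using om_int[of n] interior_of_subset[of "top_of_set (Omega C)" "\<omega> (Suc n)"] by blast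
    then show ?thesis by (rule lift_Suc_mono_le) (rule that)
  qed
  have restr_em: "emeasure (restr_meas \<mu> (\<omega> i)) A = emeasure \<mu> (\<omega> i \<inter> A)" if A: "A \<in> sets \<mu>" for i A
  proof -
    have "emeasure (restr_meas \<mu> (\<omega> i)) A = (\<integral>\<^sup>+x. indicator (\<omega> i) x * indicator A x \<partial>\<mu>)"
      unfolding restr_meas_def using A om_sets[of i] by (subst emeasure_density) auto
    also have "\<dots> = (\<integral>\<^sup>+x. indicator (\<omega> i \<inter> A) x \<partial>\<mu>)"
      by (intro nn_integral_cong) (simp split: split_indicator)
    also have "\<dots> = emeasure \<mu> (\<omega> i \<inter> A)"
      using A om_sets[of i] by (intro nn_integral_indicator) auto
    finally show ?thesis .
  qed
  have int1: "(LINT u:\<omega> i|restr_meas \<mu> (\<omega> i). (1::real)) = measure \<mu> (\<omega> i)" for i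
  proof -
    have sp: "space (restr_meas \<mu> (\<omega> i)) = Omega C" by (simp add: restr_meas_def space_mu)
    have "(LINT u:\<omega> i|restr_meas \<mu> (\<omega> i). (1::real)) = integral\<^sup>L (restr_meas \<mu> (\<omega> i)) (indicator (\<omega> i))"
      unfolding set_lebesgue_integral_def by simp
    also have "\<dots> = measure (restr_meas \<mu> (\<omega> i)) (\<omega> i)"
      using om_sub[of i] by (simp add: sp Int_absorb2)
    also have "\<dots> = measure \<mu> (\<omega> i)"
      unfolding measure_def using restr_em[OF om_sets[of i]] by simp
    finally show ?thesis .
  qed
  have m0: "measure \<mu> (\<omega> i0) > 0"
  proof -
    have "emeasure \<mu> (\<omega> i0) \<noteq> 0"
      using i0 restr_em[of "Omega C" i0] om_sub[of i0] by (simp add: space_mu[symmetric] Int_absorb2)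
    then show ?thesis by (simp add: M.emeasure_eq_measure zero_less_measure_iff)
  qed
  obtain z :: 'a where zW: "\<And>w. w \<subseteq> Omega C \<Longrightarrow> ball z 1 \<subseteq> wulff C w (\<lambda>_. 1)"
    using wulff_ball[OF cone] by blast
  define g0 where "g0 = measure gaussian (ball z 1)"
  have g0: "g0 > 0" unfolding g0_def by (rule gaussian_ball_pos)
  have closedC: "closed C" using cone unfolding pointed_ndim_closed_convex_cone_def by auto
  have lower: "g0 * measure \<mu> (\<omega> i0) \<le> I_fun C \<mu> (\<omega> i) (bar_supp (K i))" if i: "i \<ge> i0" for i
  proof -
    have wclosed: "closed (wulff C (\<omega> i) (\<lambda>_. 1))"
      unfolding wulff_def
      by (intro closed_Int closedC closed_INT allI ballI closed_Collect_le) (auto intro: continuous_intros)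
    have "g0 \<le> measure gaussian (wulff C (\<omega> i) (\<lambda>_. 1))"
      unfolding g0_def using zW[OF om_sub[of i]] wclosed
      by (intro G.finite_measure_mono) (auto simp: borel_closed)
    moreover have "measure \<mu> (\<omega> i0) \<le> measure \<mu> (\<omega> i)"
      using om_mono[OF i] om_sets[of i] by (intro M.finite_measure_mono)
    ultimately have "g0 * measure \<mu> (\<omega> i0) \<le> measure gaussian (wulff C (\<omega> i) (\<lambda>_. 1)) * measure \<mu> (\<omega> i)"
      using g0 by (intro mult_mono) auto
    also have "\<dots> = I_fun C \<mu> (\<omega> i) (\<lambda>_. 1)"
      unfolding I_fun_def int1 ..
    also have "\<dots> \<le> I_fun C \<mu> (\<omega> i) (bar_supp (K i))"
    proof -
      have "(\<lambda>_. 1) \<in> Cplus (\<omega> i)" unfolding Cplus_def by auto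
      then have "ereal (I_fun C \<mu> (\<omega> i) (\<lambda>_. 1)) \<le> (SUP f \<in> Cplus (\<omega> i). ereal (I_fun C \<mu> (\<omega> i) f))"
        by (rule SUP_upper)
      then have "ereal (I_fun C \<mu> (\<omega> i) (\<lambda>_. 1)) \<le> ereal (I_fun C \<mu> (\<omega> i) (bar_supp (K i)))"
        by (simp only: K_max[OF i])
      then show ?thesis by (rule ereal_less_eq(3)[THEN iffD1])
    qed
    finally show ?thesis .
  qed
  show ?thesis
  proof (intro exI[of _ "g0 * measure \<mu> (\<omega> i0) / 2"] conjI allI impI)
    show "0 < g0 * measure \<mu> (\<omega> i0) / 2" using g0 m0 by simp
    fix i assume "i0 \<le> i"
    then show "g0 * measure \<mu> (\<omega> i0) / 2 < I_fun C \<mu> (\<omega> i) (bar_supp (K i))"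
    proof -
      have "0 < g0 * measure \<mu> (\<omega> i0)" using g0 m0 by (rule mult_pos_pos)
      then have "g0 * measure \<mu> (\<omega> i0) / 2 < g0 * measure \<mu> (\<omega> i0)" by linarith
      then show ?thesis using lower[OF \<open>i0 \<le> i\<close>] by linarith
    qed
  qed
qed

end
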